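(* Let $K=u^2\partial_u-2(1+uR)\partial_R$. Then $$\hat g(K,K)=4u^2\Big(1+Ru+\tfrac14R^2u^2f(R)\Big).$$ Furthermore, the following are equivalent: - $f(0)>\frac34$; - there exist $u_0<0$ and $c>0$ such that $\hat g(K,K)\ge c\,u^2$ on $\Omega_{u_0}$ (i.e. $K$ is uniformly timelike on $\Omega_{u_0}$).
   Context: Let $a>0$ and let $f$ be an analytic positive function on $[0,a)$. On a manifold with coordinates $(u,R,\omega)\in\mathbb R\times[0,a)\times S^2$ consider $$\hat g=R^2f(R)\,du^2-2\,du\,dR-d\omega^2,$$ with future null infinity $\mathscr I^+=\{R=0\}$. Put $r=1/R$. Fix a function $r_*$ of $r$ with $\frac{dr_*}{dr}=\frac1{f(1/r)}$ (equivalently $dR=-R^2f(R)\,dr_*$), and set $t=u+r_*$. For $u_0<0$, let $\Omega_{u_0}=\{t\ge0\}\cap\{u<u_0\}$. *)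

theory Defs
  imports "HOL-Analysis.Analysis"
begin

definition real_analytic_on :: "(real \<Rightarrow> real) \<Rightarrow> real set \<Rightarrow> bool" where
  "real_analytic_on f S \<longleftrightarrow>
     (\<forall>x\<in>S. \<exists>\<delta>>0. \<exists>c :: nat \<Rightarrow> real.
        \<forall>y\<in>S. \<bar>y - x\<bar> < \<delta> \<longrightarrow> (\<lambda>n. c n * (y - x) ^ n) sums f y)"

text \<open>The metric ghat = R^2 f(R) du^2 - 2 du dR - d\<omega>^2 evaluated on two tangent vectors
  at a point with coordinate R, for vectors with no S^2-component, written as
  (du-component, dR-component).\<close>
definition ghat :: "(real \<Rightarrow> real) \<Rightarrow> real \<Rightarrow> real \<times> real \<Rightarrow> real \<times> real \<Rightarrow> real" where
  "ghat f R X Y = R^2 * f R * fst X * fst Y - (fst X * snd Y + snd X * fst Y)"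

definition Kfield :: "real \<Rightarrow> real \<Rightarrow> real \<times> real" where
  "Kfield u R = (u^2, -2 * (1 + u * R))"

text \<open>\<Omega>_{u0} = {t \<ge> 0} \<inter> {u < u0} in the (u,R)-coordinates (S^2 factor suppressed),
  where t = u + r_*(r), r = 1/R, on the region 0 < R < a where r is defined.\<close>
definition Omega :: "real \<Rightarrow> (real \<Rightarrow> real) \<Rightarrow> real \<Rightarrow> (real \<times> real) set" where
  "Omega a rs u0 = {(u, R). 0 < R \<and> R < a \<and> u < u0 \<and> u + rs (1 / R) \<ge> 0}"

end

theory Submission
  imports Defs
begin

lemma f_right_cont:
  fixes f :: "real \<Rightarrow> real" and a :: real
  assumes "a > 0" and "real_analytic_on f {0..<a}"
  shows "(f \<longlongrightarrow> f 0) (at_right 0)"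
proof -
  from assms(2) obtain \<delta> and c :: "nat \<Rightarrow> real" where d: "\<delta> > 0"
    and s: "\<forall>y\<in>{0..<a}. \<bar>y - 0\<bar> < \<delta> \<longrightarrow> (\<lambda>n. c n * (y - 0) ^ n) sums f y"
    unfolding real_analytic_on_def using assms(1) by fastforce
  define K where "K = min \<delta> a / 2"
  have K: "0 < K" "K < a" "K < \<delta>" using d assms(1) by (auto simp: K_def)
  have "summable (\<lambda>n. c n * K ^ n)" using s K by (auto simp: sums_iff)
  hence ic: "isCont (\<lambda>x. \<Sum>n. c n * x^n) 0"
    by (rule isCont_powser) (use K in auto)
  have g0: "(\<Sum>n. c n * (0::real)^n) = f 0"
    using s d assms(1) by (auto simp: sums_iff)
  have "((\<lambda>x. \<Sum>n. c n * x^n) \<longlongrightarrow> (\<Sum>n. c n * (0::real)^n)) (at 0)"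
    using ic by (simp add: isCont_def)
  hence "((\<lambda>x. \<Sum>n. c n * x^n) \<longlongrightarrow> (\<Sum>n. c n * (0::real)^n)) (at_right 0)"
    using filterlim_at_split by blast
  hence "((\<lambda>x. \<Sum>n. c n * x^n) \<longlongrightarrow> f 0) (at_right 0)"
    using g0 by simp
  moreover have "eventually (\<lambda>x. (\<Sum>n. c n * x^n) = f x) (at_right 0)"
    unfolding eventually_at_right_field
    using K s by (intro exI[of _ K]) (auto simp: sums_iff)
  ultimately show ?thesis by (rule Lim_transform_eventually)
qed

lemma rs_ratio:
  fixes f rs :: "real \<Rightarrow> real" and a :: real
  assumes a: "a > 0" and fc: "(f \<longlongrightarrow> f 0) (at_right 0)" and f0: "f 0 > 0"
    and d: "\<forall>r>1 / a. (rs has_real_derivative 1 / f (1 / r)) (at r)"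
  shows "((\<lambda>R. R * rs (1/R)) \<longlongrightarrow> 1 / f 0) (at_right 0)"
proof -
  have "((\<lambda>r. f (inverse r)) \<longlongrightarrow> f 0) at_top"
    using filterlim_compose[OF fc filterlim_inverse_at_right_top] .
  hence l1: "((\<lambda>r. 1 / f (1 / r)) \<longlongrightarrow> 1 / f 0) at_top"
    using f0 by (auto intro!: tendsto_divide simp: inverse_eq_divide)
  have "((\<lambda>r. rs r / r) \<longlongrightarrow> 1 / f 0) at_top"
  proof (rule lhospital_at_top_at_top[where g'="\<lambda>_. 1" and f'="\<lambda>r. 1 / f (1 / r)"])
    show "filterlim (\<lambda>x. x) at_top at_top" by (rule filterlim_ident)
    show "\<forall>\<^sub>F x in at_top. (1::real) \<noteq> 0" by simp
    show "\<forall>\<^sub>F x in at_top. (rs has_real_derivative 1 / f (1 / x)) (at x)"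
      using eventually_gt_at_top[of "1/a"] by eventually_elim (use d in auto)
    show "\<forall>\<^sub>F x in at_top. ((\<lambda>x. x) has_real_derivative 1) (at x)"
      by (simp add: DERIV_ident)
    show "((\<lambda>x. 1 / f (1 / x) / 1) \<longlongrightarrow> 1 / f 0) at_top" using l1 by simp
  qed
  hence "((\<lambda>x. rs (inverse x) / inverse x) \<longlongrightarrow> 1 / f 0) (at_right 0)"
    by (simp only: filterlim_at_top_to_right)
  moreover have "\<And>x. rs (inverse x) / inverse x = x * rs (1/x)"
    by (simp add: inverse_eq_divide)
  ultimately show ?thesis by simp
qed

lemma ghat_K: "ghat f R (Kfield u R) (Kfield u R) = 4 * u^2 * (1 + R * u + R^2 * u^2 * f R / 4)"
  by (simp add: ghat_def Kfield_def power2_eq_square algebra_simps)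

lemma rs_mono:
  fixes f rs :: "real \<Rightarrow> real" and a :: real
  assumes a: "a > 0" and fp: "\<forall>R\<in>{0..<a}. f R > 0"
    and d: "\<forall>r>1 / a. (rs has_real_derivative 1 / f (1 / r)) (at r)"
    and st: "1/a < s" "s \<le> t"
  shows "rs s \<le> rs t"
proof (rule DERIV_nonneg_imp_nondecreasing[OF st(2)])
  fix x assume x: "s \<le> x" "x \<le> t"
  hence x1: "1/a < x" using st by linarith
  hence xp: "x > 0" using a by (smt (verit) divide_pos_pos)
  have "1/x < a" using x1 a xp by (simp add: field_simps)
  moreover have "1/x \<ge> 0" using xp by simp
  ultimately have "f (1/x) > 0" using fp by auto
  thus "\<exists>y. (rs has_real_derivative y) (at x) \<and> 0 \<le> y" using d x1 by (intro exI[of _ "1 / f (1/x)"]) auto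
qed

lemma q_bound:
  fixes x X F g m :: real
  assumes "0 \<le> x" "x \<le> X" "F > 0" "X * F < 2" "F \<ge> g"
  shows "1 - x + x^2 * F / 4 \<ge> 1 - X + X^2 * g / 4"
proof -
  have "(1 - x + x^2 * F / 4) - (1 - X + X^2 * F / 4) = (X - x) * (1 - (X + x) * F / 4)"
    by (simp add: field_simps power2_eq_square)
  moreover have "(X + x) * F \<le> 2 * X * F" using assms by (simp add: mult_right_mono)
  hence "1 - (X + x) * F / 4 \<ge> 0" using assms by linarith
  ultimately have "(1 - x + x^2 * F / 4) \<ge> (1 - X + X^2 * F / 4)"
    using assms by (smt (verit) mult_nonneg_nonneg)
  moreover have "X^2 * F \<ge> X^2 * g" using assms by (simp add: mult_left_mono)
  ultimately show ?thesis by linarith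
qed

theorem lemma3:
  fixes f rs :: "real \<Rightarrow> real" and a :: real
  assumes "a > 0"
    and "real_analytic_on f {0..<a}"
    and "\<forall>R\<in>{0..<a}. f R > 0"
    and "\<forall>r>1 / a. (rs has_real_derivative 1 / f (1 / r)) (at r)"
  shows "(\<forall>u. \<forall>R\<in>{0..<a}.
            ghat f R (Kfield u R) (Kfield u R) = 4 * u^2 * (1 + R * u + R^2 * u^2 * f R / 4))
       \<and> (f 0 > 3 / 4 \<longleftrightarrow>
            (\<exists>u0<0. \<exists>c>0. \<forall>(u, R)\<in>Omega a rs u0.
               ghat f R (Kfield u R) (Kfield u R) \<ge> c * u^2))"
proof -
  have f0: "f 0 > 0" using assms(1,3) by auto
  have fc: "(f \<longlongrightarrow> f 0) (at_right 0)" using f_right_cont assms(1,2) by blast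
  have rl: "((\<lambda>R. R * rs (1/R)) \<longlongrightarrow> 1 / f 0) (at_right 0)"
    using rs_ratio[OF assms(1) fc f0 assms(4)] .
  have mono: "\<And>s t. 1/a < s \<Longrightarrow> s \<le> t \<Longrightarrow> rs s \<le> rs t"
    using rs_mono[OF assms(1,3,4)] by blast
  have fwd: "\<exists>u0<0. \<exists>c>0. \<forall>(u, R)\<in>Omega a rs u0.
               ghat f R (Kfield u R) (Kfield u R) \<ge> c * u^2" if h: "f 0 > 3/4"
  proof -
    define k where "k = (1 + min (4 * f 0 / 3) (4/3)) / 2"
    have k1: "1 < k" "k < 4 * f 0 / 3" "k \<le> 7/6" using h by (auto simp: k_def)
    have "1 / f 0 < k / f 0" using k1 f0 by (simp add: divide_strict_right_mono)
    hence ev1: "eventually (\<lambda>R. R * rs (1/R) < k / f 0) (at_right 0)"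
      using order_tendstoD(2)[OF rl] by blast
    have "f 0 / k < f 0" using k1 f0 by (simp add: field_simps)
    hence ev2: "eventually (\<lambda>R. f R > f 0 / k) (at_right 0)"
      using order_tendstoD(1)[OF fc] by blast
    have "f 0 < k * f 0" using k1 f0 by simp
    hence ev3: "eventually (\<lambda>R. f R < k * f 0) (at_right 0)"
      using order_tendstoD(2)[OF fc] by blast
    have "eventually (\<lambda>R. R * rs (1/R) < k / f 0 \<and> f R > f 0 / k \<and> f R < k * f 0) (at_right 0)"
      using ev1 ev2 ev3 by (auto elim: eventually_elim2 intro: eventually_conj)
    then obtain b where b: "b > 0" and bP: "\<And>R. 0 < R \<Longrightarrow> R < b \<Longrightarrow>
        R * rs (1/R) < k / f 0 \<and> f R > f 0 / k \<and> f R < k * f 0"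
      unfolding eventually_at_right_field by auto
    define \<delta> where "\<delta> = min b a / 2"
    have dl: "0 < \<delta>" "\<delta> < a" "\<delta> < b" using b assms(1) by (auto simp: \<delta>_def)
    define u0 where "u0 = min (-1) (- rs (1/\<delta>) - 1)"
    define m where "m = 1 - 3 * k / (4 * f 0)"
    have mpos: "m > 0" using k1 f0 by (simp add: m_def field_simps)
    have "\<forall>(u, R)\<in>Omega a rs u0. ghat f R (Kfield u R) (Kfield u R) \<ge> (4 * m) * u^2"
    proof (clarify)
      fix u R assume "(u, R) \<in> Omega a rs u0"
      hence R: "0 < R" "R < a" "u < u0" "u + rs (1/R) \<ge> 0" by (auto simp: Omega_def)
      have un: "u < 0" using R(3) by (simp add: u0_def)
      show "ghat f R (Kfield u R) (Kfield u R) \<ge> (4 * m) * u^2"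
      proof (cases "R < \<delta>")
        case False
        have "1/a < 1/R" using R assms(1) by (simp add: divide_strict_left_mono)
        moreover have "1/R \<le> 1/\<delta>" using False dl by (simp add: divide_left_mono)
        ultimately have "rs (1/R) \<le> rs (1/\<delta>)" using mono by blast
        hence False using R(3,4) by (simp add: u0_def)
        thus ?thesis ..
      next
        case True
        hence P: "R * rs (1/R) < k / f 0" "f R > f 0 / k" "f R < k * f 0" using bP[of R] R dl by auto
        define x where "x = - R * u"
        have "R * u < 0" using R un by (simp add: mult_pos_neg)
        hence x0: "0 \<le> x" by (simp add: x_def)
        have mu: "-u \<le> rs (1/R)" using R by linarith
        have "x \<le> R * rs (1/R)" using mult_left_mono[OF mu, of R] R by (simp add: x_def)
        hence xX: "x \<le> k / f 0" using P by linarith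
        have Fp: "f R > 0" using R assms(3) by auto
        have "k / f 0 > 0" using k1 f0 by simp
        hence "k / f 0 * f R < k / f 0 * (k * f 0)" using P(3) by (rule mult_strict_left_mono[rotated])
        also have "\<dots> = k * k" using f0 by simp
        also have "\<dots> < 2"
        proof -
          have "k * k \<le> 7/6 * k" using k1 by (intro mult_right_mono) auto
          thus ?thesis using k1 by linarith
        qed
        finally have XF: "k / f 0 * f R < 2" .
        have qb: "1 - x + x^2 * f R / 4 \<ge> 1 - k / f 0 + (k / f 0)^2 * (f 0 / k) / 4"
          by (rule q_bound[OF x0 xX Fp XF]) (use P in simp)
        have "1 - k / f 0 + (k / f 0)^2 * (f 0 / k) / 4 = m"
          using f0 k1 by (simp add: m_def field_simps power2_eq_square)
        with qb have q: "1 + R * u + R^2 * u^2 * f R / 4 \<ge> m"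
          by (simp add: x_def power2_eq_square algebra_simps)
        have "4 * u^2 * m \<le> 4 * u^2 * (1 + R * u + R^2 * u^2 * f R / 4)"
          using q by (simp add: mult_left_mono)
        thus ?thesis by (simp add: ghat_K algebra_simps)
      qed
    qed
    moreover have "u0 < 0" by (simp add: u0_def)
    moreover have "4 * m > 0" using mpos by simp
    ultimately show ?thesis by blast
  qed
  have bwd: "f 0 > 3/4" if h: "\<exists>u0<0. \<exists>c>0. \<forall>(u, R)\<in>Omega a rs u0.
               ghat f R (Kfield u R) (Kfield u R) \<ge> c * u^2"
  proof (rule ccontr)
    assume nf: "\<not> f 0 > 3/4"
    from h obtain u0 c where u0: "u0 < 0" and c: "c > 0" and B: "\<forall>(u, R)\<in>Omega a rs u0.
               ghat f R (Kfield u R) (Kfield u R) \<ge> c * u^2" by blast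
    have hq: "((\<lambda>R. 1 - R * rs (1/R) + (R * rs (1/R))^2 * f R / 4) \<longlongrightarrow>
              1 - 1 / f 0 + (1 / f 0)^2 * f 0 / 4) (at_right 0)"
      by (intro tendsto_intros rl fc) simp
    have "1 - 1 / f 0 + (1 / f 0)^2 * f 0 / 4 = 1 - 3 / (4 * f 0)"
      using f0 by (simp add: field_simps power2_eq_square)
    also have "\<dots> \<le> 0" using nf f0 by (simp add: field_simps)
    also have "\<dots> < c / 4" using c by simp
    finally have ev1: "eventually (\<lambda>R. 1 - R * rs (1/R) + (R * rs (1/R))^2 * f R / 4 < c / 4) (at_right 0)"
      using order_tendstoD(2)[OF hq] by blast
    have "1 / (2 * f 0) < 1 / f 0" using f0 by (simp add: field_simps)
    hence ev2: "eventually (\<lambda>R. R * rs (1/R) > 1 / (2 * f 0)) (at_right 0)"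
      using order_tendstoD(1)[OF rl] by blast
    obtain b where b: "b > 0" and bP: "\<And>R. 0 < R \<Longrightarrow> R < b \<Longrightarrow>
        1 - R * rs (1/R) + (R * rs (1/R))^2 * f R / 4 < c / 4 \<and> R * rs (1/R) > 1 / (2 * f 0)"
      using eventually_conj[OF ev1 ev2] unfolding eventually_at_right_field by auto
    define R where "R = min b (min a (1 / (2 * f 0 * (- u0)))) / 2"
    have pos: "1 / (2 * f 0 * (- u0)) > 0" using f0 u0 by (simp add: mult_neg_pos)
    have mm: "min b (min a (1 / (2 * f 0 * (- u0)))) \<le> 1 / (2 * f 0 * (- u0))"
      "min b (min a (1 / (2 * f 0 * (- u0)))) \<le> a" "min b (min a (1 / (2 * f 0 * (- u0)))) \<le> b"
      "min b (min a (1 / (2 * f 0 * (- u0)))) > 0"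
      using b assms(1) pos by linarith+
    have R: "0 < R" "R < b" "R < a" "R < 1 / (2 * f 0 * (- u0))"
      using b assms(1) pos mm unfolding R_def by linarith+
    have P: "1 - R * rs (1/R) + (R * rs (1/R))^2 * f R / 4 < c / 4" "R * rs (1/R) > 1 / (2 * f 0)"
      using bP R by auto
    have pp: "2 * f 0 * (- u0) > 0" using f0 u0 by (simp add: mult_neg_pos)
    have "R * (2 * f 0 * (- u0)) < 1" using R(4) pos_less_divide_eq[OF pp] by blast
    hence "R * (- u0) < 1 / (2 * f 0)" using f0 by (simp add: field_simps)
    hence "R * (- u0) < R * rs (1/R)" using P by linarith
    hence rsb: "rs (1/R) > - u0" using R(1) by (metis mult_less_cancel_left_pos)
    define u where "u = - rs (1/R)"
    have "(u, R) \<in> Omega a rs u0" using R rsb by (simp add: Omega_def u_def)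
    hence "ghat f R (Kfield u R) (Kfield u R) \<ge> c * u^2" using B by auto
    hence "4 * u^2 * (1 - R * rs (1/R) + (R * rs (1/R))^2 * f R / 4) \<ge> c * u^2"
      by (simp add: ghat_K u_def power2_eq_square algebra_simps)
    moreover have "u^2 > 0" using rsb u0 by (simp add: u_def)
    moreover have "4 * u^2 * (1 - R * rs (1/R) + (R * rs (1/R))^2 * f R / 4) < 4 * u^2 * (c/4)"
      using P(1) \<open>u^2 > 0\<close> by simp
    ultimately show False by simp
  qed
  show ?thesis using fwd bwd ghat_K by blast
qed

end
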